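(* Consider the random-field Ising model: $E=\{-1,+1\}$, $E'=\{h_1,\dots,h_L\}\subset\mathbb R$ finite with $L\ge 2$, $\alpha[h](\sigma)=\frac{e^{h\sigma}}{2\cosh h}$ for $h\in E'$, $\sigma\in E$, $\pi\in\mathcal P(E')$ with $\pi(h)>0$ for all $h\in E'$, and $F(\nu)=G(\nu(+1)-\nu(-1))$ where $G:[-1,1]\to\mathbb R$ is twice continuously differentiable with $G'$ injective. Then the non-degeneracy condition 2) holds automatically: any two distinct minimizers $\hat\nu\neq\hat\nu'$ of $\Phi[\pi]$ on $\mathcal P(E)^{E'}$ have distinct stability vectors $B_{\hat\nu}\neq B_{\hat\nu'}$.
   Context: Free energy: $\Phi[\pi](\hat\nu)=F(\sum_h\pi(h)\hat\nu(h))+\sum_h\pi(h)S(\hat\nu(h)|\alpha[h])$ for $\hat\nu=(\hat\nu(h))_{h\in E'}\in\mathcal P(E)^{E'}$, $S(p|q)=\sum_a p(a)\log(p(a)/q(a))$. Write $\pi\cdot\hat\nu=\sum_h\pi(h)\hat\nu(h)$. For a minimizer $\hat\nu$, the stability vector $B_{\hat\nu}\in T\mathcal P(E')=\{x\in\mathbb R^{E'}:\sum_hx(h)=0\}$ is the vector with $\langle x,B_{\hat\nu}\rangle=-\big(dF_{\pi\cdot\hat\nu}(\sum_hx(h)\hat\nu(h))+\sum_hx(h)S(\hat\nu(h)|\alpha[h])\big)$ for all $x\in T\mathcal P(E')$, where $dF_\nu$ is the differential of $F$ on the tangent space $\{y\in\mathbb R^E:\sum y=0\}$ of the simplex $\mathcal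 P(E)$. *)

theory Defs
  imports "HOL-Analysis.Analysis"
begin

definition spins :: "real set" where
  "spins = {-1, 1}"

definition is_prob :: "'a set \<Rightarrow> ('a \<Rightarrow> real) \<Rightarrow> bool" where
  "is_prob A p \<longleftrightarrow> (\<forall>a\<in>A. 0 \<le> p a) \<and> sum p A = 1"

definition alpha :: "real \<Rightarrow> real \<Rightarrow> real" where
  "alpha h \<sigma> = exp (h * \<sigma>) / (2 * cosh h)"

text \<open>Relative entropy S(p|q) = sum_a p(a) log(p(a)/q(a)) over E (0 log 0 = 0).\<close>
definition relent :: "(real \<Rightarrow> real) \<Rightarrow> (real \<Rightarrow> real) \<Rightarrow> real" where
  "relent p q = (\<Sum>a\<in>spins. p a * ln (p a / q a))"

definition mix :: "real set \<Rightarrow> (real \<Rightarrow> real) \<Rightarrow> (real \<Rightarrow> real \<Rightarrow> real) \<Rightarrow> real \<Rightarrow> real" where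
  "mix E' w \<nu> = (\<lambda>a. \<Sum>h\<in>E'. w h * \<nu> h a)"

definition Fising :: "(real \<Rightarrow> real) \<Rightarrow> (real \<Rightarrow> real) \<Rightarrow> real" where
  "Fising G \<nu> = G (\<nu> 1 - \<nu> (-1))"

text \<open>Differential of F at nu applied to a tangent vector y (sum y = 0), where G' is
  the derivative of G: dF_nu(y) = G'(nu(+1)-nu(-1)) (y(+1)-y(-1)).\<close>
definition dFising :: "(real \<Rightarrow> real) \<Rightarrow> (real \<Rightarrow> real) \<Rightarrow> (real \<Rightarrow> real) \<Rightarrow> real" where
  "dFising G' \<nu> y = G' (\<nu> 1 - \<nu> (-1)) * (y 1 - y (-1))"

definition Phi :: "(real \<Rightarrow> real) \<Rightarrow> real set \<Rightarrow> (real \<Rightarrow> real) \<Rightarrow> (real \<Rightarrow> real \<Rightarrow> real) \<Rightarrow> real" where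
  "Phi G E' w \<nu> = Fising G (mix E' w \<nu>) + (\<Sum>h\<in>E'. w h * relent (\<nu> h) (alpha h))"

definition admissible :: "real set \<Rightarrow> (real \<Rightarrow> real \<Rightarrow> real) \<Rightarrow> bool" where
  "admissible E' \<nu> \<longleftrightarrow> (\<forall>h\<in>E'. is_prob spins (\<nu> h))"

definition is_minimizer :: "(real \<Rightarrow> real) \<Rightarrow> real set \<Rightarrow> (real \<Rightarrow> real) \<Rightarrow> (real \<Rightarrow> real \<Rightarrow> real) \<Rightarrow> bool" where
  "is_minimizer G E' w \<nu> \<longleftrightarrow> admissible E' \<nu> \<and>
     (\<forall>\<mu>. admissible E' \<mu> \<longrightarrow> Phi G E' w \<nu> \<le> Phi G E' w \<mu>)"

definition is_stability_vector ::
  "(real \<Rightarrow> real) \<Rightarrow> real set \<Rightarrow> (real \<Rightarrow> real) \<Rightarrow> (real \<Rightarrow> real \<Rightarrow> real) \<Rightarrow> (real \<Rightarrow> real) \<Rightarrow> bool" where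
  "is_stability_vector G' E' w \<nu> B \<longleftrightarrow> sum B E' = 0 \<and>
     (\<forall>x. sum x E' = 0 \<longrightarrow>
        (\<Sum>h\<in>E'. x h * B h) =
          - (dFising G' (mix E' w \<nu>) (\<lambda>a. \<Sum>h\<in>E'. x h * \<nu> h a)
             + (\<Sum>h\<in>E'. x h * relent (\<nu> h) (alpha h))))"

end

theory Submission imports Defs begin

lemma lipschitz_G:
  fixes G G' :: "real \<Rightarrow> real"
  assumes G_deriv: "\<forall>x\<in>{-1..1}. (G has_real_derivative G' x) (at x within {-1..1})"
    and G'_deriv: "\<forall>x\<in>{-1..1}. (G' has_real_derivative G'' x) (at x within {-1..1})"
  shows "\<exists>M\<ge>0. \<forall>x\<in>{-1..1}. \<forall>y\<in>{-1..1}. \<bar>G x - G y\<bar> \<le> M * \<bar>x - y\<bar>"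
proof -
  have "continuous_on {-1..1} G'" using G'_deriv by (intro DERIV_continuous_on) auto
  then have "compact (G' ` {-1..1})" by (intro compact_continuous_image) auto
  then obtain M where M: "\<forall>z\<in>G' ` {-1..1}. norm z \<le> M" using compact_imp_bounded bounded_iff by metis
  have "\<forall>x\<in>{-1..1}. \<forall>y\<in>{-1..1}. \<bar>G x - G y\<bar> \<le> \<bar>M\<bar> * \<bar>x - y\<bar>"
  proof (intro ballI)
    fix x y :: real assume xy: "x \<in> {-1..1}" "y \<in> {-1..1}"
    have "norm (G x - G y) \<le> \<bar>M\<bar> * norm (x - y)"
    proof (rule differentiable_bound[where f' = "\<lambda>x. (*) (G' x)"])
      show "convex {-1..1::real}" by simp
      show "\<And>x. x \<in> {-1..1} \<Longrightarrow> (G has_derivative (*) (G' x)) (at x within {-1..1})"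
        using G_deriv unfolding has_field_derivative_def by (auto simp: mult.commute)
      show "\<And>x. x \<in> {-1..1} \<Longrightarrow> onorm ((*) (G' x)) \<le> \<bar>M\<bar>"
      proof -
        fix x :: real assume "x \<in> {-1..1}"
        then have "\<bar>G' x\<bar> \<le> \<bar>M\<bar>" using M by force
        then show "onorm ((*) (G' x)) \<le> \<bar>M\<bar>"
          by (intro onorm_le) (auto simp: abs_mult intro: mult_right_mono)
      qed
    qed (use xy in auto)
    then show "\<bar>G x - G y\<bar> \<le> \<bar>M\<bar> * \<bar>x - y\<bar>" by simp
  qed
  then show ?thesis by (intro exI[of _ "\<bar>M\<bar>"]) auto
qed


definition ent :: "real \<Rightarrow> real \<Rightarrow> real \<Rightarrow> real" where
  "ent a1 a2 p = p * ln (p / a1) + (1 - p) * ln ((1 - p) / a2)"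

lemma not_at_zero:
  fixes G :: "real \<Rightarrow> real"
  assumes M: "M \<ge> 0" and Lip: "\<forall>x\<in>{-1..1}. \<forall>y\<in>{-1..1}. \<bar>G x - G y\<bar> \<le> M * \<bar>x - y\<bar>"
    and rng: "\<forall>p\<in>{0..1}. K + 2*w0*p \<in> {-1..1}" and w0: "w0 > 0" and a1: "a1 > 0" and a2: "a2 > 0"
  shows "\<exists>p\<in>{0<..<1}. G (K + 2*w0*p) + w0 * ent a1 a2 p < G K + w0 * ent a1 a2 0"
proof -
  define C where "C = 2*M - ln a1 + ln a2"
  define p where "p = min (1/2) (exp (-C-1))"
  have p0: "p > 0" and p1: "p < 1" unfolding p_def by auto
  have lnp: "ln p \<le> -C-1" unfolding p_def
    by (metis exp_gt_zero half_gt_zero ln_exp ln_le_cancel_iff min.cobounded2 min_less_iff_conj zero_less_one)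
  have "\<bar>G (K + 2*w0*p) - G K\<bar> \<le> M * \<bar>(K + 2*w0*p) - K\<bar>"
    using Lip rng p0 p1 by (metis atLeastAtMost_iff less_eq_real_def mult_zero_right add_0_right zero_le_one)
  then have g: "G (K + 2*w0*p) - G K \<le> M * (2*w0*p)" using w0 p0 by simp
  have l1: "(1-p) * ln (1-p) \<le> 0" using p0 p1 by (intro mult_nonneg_nonpos) auto
  have e: "ent a1 a2 p - ent a1 a2 0 = p * (ln p - ln a1 + ln a2) + (1-p) * ln (1-p)"
    unfolding ent_def using p0 p1 a1 a2 by (simp add: ln_div algebra_simps)
  have "p * (ln p - ln a1 + ln a2) \<le> p * (-1 - 2*M)"
    using lnp p0 unfolding C_def by (intro mult_left_mono) auto
  then have "w0 * (ent a1 a2 p - ent a1 a2 0) \<le> w0 * (p * (-1 - 2*M))"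
    using e l1 w0 by (intro mult_left_mono) auto
  then have "G (K + 2*w0*p) + w0 * ent a1 a2 p - (G K + w0 * ent a1 a2 0) \<le> - w0 * p"
    using g by (simp add: algebra_simps)
  moreover have "w0 * p > 0" using w0 p0 by simp
  ultimately show ?thesis using p0 p1 by (intro bexI[of _ p]) auto
qed


lemma not_at_one:
  fixes G :: "real \<Rightarrow> real"
  assumes M: "M \<ge> 0" and Lip: "\<forall>x\<in>{-1..1}. \<forall>y\<in>{-1..1}. \<bar>G x - G y\<bar> \<le> M * \<bar>x - y\<bar>"
    and rng: "\<forall>p\<in>{0..1}. K + 2*w0*p \<in> {-1..1}" and w0: "w0 > 0" and a1: "a1 > 0" and a2: "a2 > 0"
  shows "\<exists>p\<in>{0<..<1}. G (K + 2*w0*p) + w0 * ent a1 a2 p < G (K + 2*w0*1) + w0 * ent a1 a2 1"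
proof -
  have Lip': "\<forall>x\<in>{-1..1}. \<forall>y\<in>{-1..1}. \<bar>(\<lambda>x. G (-x)) x - (\<lambda>x. G (-x)) y\<bar> \<le> M * \<bar>x - y\<bar>"
  proof (intro ballI)
    fix x y :: real assume "x \<in> {-1..1}" "y \<in> {-1..1}"
    then have "\<bar>G (-x) - G (-y)\<bar> \<le> M * \<bar>-x - -y\<bar>" using Lip[rule_format, of "-x" "-y"] by auto
    then show "\<bar>(\<lambda>x. G (-x)) x - (\<lambda>x. G (-x)) y\<bar> \<le> M * \<bar>x - y\<bar>" by (simp add: abs_minus_commute)
  qed
  have rng': "\<forall>p\<in>{0..1}. -(K + 2*w0) + 2*w0*p \<in> {-1..1}"
  proof
    fix p :: real assume "p \<in> {0..1}"
    then have "1 - p \<in> {0..1}" by auto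
    then have "K + 2*w0*(1-p) \<in> {-1..1}" using rng by blast
    then show "-(K + 2*w0) + 2*w0*p \<in> {-1..1}" by (auto simp: algebra_simps)
  qed
  from not_at_zero[OF M Lip' rng' w0 a2 a1] obtain t where t: "t \<in> {0<..<1}"
    and lt: "G (- (- (K + 2*w0) + 2*w0*t)) + w0 * ent a2 a1 t < G (- (- (K + 2*w0) + 2*w0*0)) + w0 * ent a2 a1 0"
    by auto
  have e1: "ent a2 a1 t = ent a1 a2 (1-t)" "ent a2 a1 0 = ent a1 a2 1" unfolding ent_def by auto
  have "G (K + 2*w0*(1-t)) + w0 * ent a1 a2 (1-t) < G (K + 2*w0*1) + w0 * ent a1 a2 1"
    using lt unfolding e1 by (simp add: algebra_simps)
  then show ?thesis using t by (intro bexI[of _ "1-t"]) auto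
qed

lemma foc_abstract:
  fixes G G' :: "real \<Rightarrow> real"
  assumes M: "M \<ge> 0" and Lip: "\<forall>x\<in>{-1..1}. \<forall>y\<in>{-1..1}. \<bar>G x - G y\<bar> \<le> M * \<bar>x - y\<bar>"
    and rng: "\<forall>p\<in>{0..1}. K + 2*w0*p \<in> {-1..1}" and w0: "w0 > 0" and a1: "a1 > 0" and a2: "a2 > 0"
    and ps: "ps \<in> {0..1}"
    and mn: "\<forall>p\<in>{0..1}. G (K + 2*w0*ps) + w0 * ent a1 a2 ps \<le> G (K + 2*w0*p) + w0 * ent a1 a2 p"
    and Gd: "\<forall>x\<in>{-1<..<1}. (G has_real_derivative G' x) (at x)"
  shows "0 < ps" "ps < 1" "K + 2*w0*ps \<in> {-1<..<1}"
    "2 * G' (K + 2*w0*ps) + ln ps - ln a1 - ln (1 - ps) + ln a2 = 0"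
proof -
  show p0: "0 < ps"
  proof (rule ccontr)
    assume "\<not> 0 < ps" then have "ps = 0" using ps by auto
    moreover obtain p where "p \<in> {0<..<1}" "G (K + 2*w0*p) + w0 * ent a1 a2 p < G K + w0 * ent a1 a2 0"
      using not_at_zero[OF M Lip rng w0 a1 a2] by auto
    ultimately show False using mn[rule_format, of p] by auto
  qed
  show p1: "ps < 1"
  proof (rule ccontr)
    assume "\<not> ps < 1" then have "ps = 1" using ps by auto
    moreover obtain p where "p \<in> {0<..<1}" "G (K + 2*w0*p) + w0 * ent a1 a2 p < G (K + 2*w0*1) + w0 * ent a1 a2 1"
      using not_at_one[OF M Lip rng w0 a1 a2] by auto
    ultimately show False using mn[rule_format, of p] by auto
  qed
  have r0: "K \<ge> -1" using rng[rule_format, of 0] by auto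
  have r1: "K + 2*w0 \<le> 1" using rng[rule_format, of 1] by auto
  have "w0*ps > 0" "w0*ps < w0" using w0 p0 p1 by auto
  then show xin: "K + 2*w0*ps \<in> {-1<..<1}" using r0 r1 by simp
  define f where "f = (\<lambda>p. G (K + 2*w0*p) + w0 * ent a1 a2 p)"
  define l where "l = G' (K + 2*w0*ps) * (2*w0) + w0 * (ln (ps/a1) - ln ((1-ps)/a2))"
  have dG0: "(G has_real_derivative G' (K + 2*w0*ps)) (at (K + 2*w0*ps))" using Gd xin by blast
  have dA: "((\<lambda>p. K + 2*w0*p) has_real_derivative 2*w0) (at ps)"
    by (auto intro!: derivative_eq_intros)
  have dG: "((\<lambda>p. G (K + 2*w0*p)) has_real_derivative G' (K + 2*w0*ps) * (2*w0)) (at ps)"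
    using DERIV_chain2[OF dG0 dA] .
  have dE: "(ent a1 a2 has_real_derivative (ln (ps/a1) - ln ((1-ps)/a2))) (at ps)"
    unfolding ent_def using p0 p1 a1 a2
    apply (auto intro!: derivative_eq_intros)
    done
  have "(f has_real_derivative l) (at ps)"
    unfolding f_def l_def by (intro DERIV_add dG DERIV_cmult dE)
  then have "l = 0"
  proof (rule DERIV_local_min)
    show "0 < min ps (1-ps)" using p0 p1 by auto
    show "\<forall>y. \<bar>ps - y\<bar> < min ps (1 - ps) \<longrightarrow> f ps \<le> f y"
    proof (intro allI impI)
      fix y assume "\<bar>ps - y\<bar> < min ps (1 - ps)"
      then have "y \<in> {0..1}" by (auto simp: abs_if split: if_splits)
      then show "f ps \<le> f y" using mn unfolding f_def by blast
    qed
  qed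
  then show "2 * G' (K + 2*w0*ps) + ln ps - ln a1 - ln (1 - ps) + ln a2 = 0"
  proof -
    have "l = w0 * (2 * G' (K + 2*w0*ps) + ln ps - ln a1 - ln (1 - ps) + ln a2)"
      unfolding l_def using w0 p0 p1 a1 a2 by (simp add: ln_div algebra_simps)
    with \<open>l = 0\<close> w0 show ?thesis by simp
  qed
qed


lemma prob_spins:
  assumes "is_prob spins q"
  shows "q (-1) = 1 - q 1" "0 \<le> q 1" "q 1 \<le> 1"
  using assms unfolding is_prob_def spins_def by auto

lemma relent_ent:
  assumes "q (-1) = 1 - q 1"
  shows "relent q (alpha h) = ent (alpha h 1) (alpha h (-1)) (q 1)"
  using assms unfolding relent_def ent_def spins_def by auto

lemma mag_split:
  assumes fin: "finite E'" and h0: "h0 \<in> E'" and q: "\<nu> h0 (-1) = 1 - \<nu> h0 1"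
  shows "mix E' w \<nu> 1 - mix E' w \<nu> (-1) =
    ((\<Sum>h\<in>E'-{h0}. w h * (\<nu> h 1 - \<nu> h (-1))) - w h0) + 2 * w h0 * \<nu> h0 1"
proof -
  have "mix E' w \<nu> 1 - mix E' w \<nu> (-1) = (\<Sum>h\<in>E'. w h * (\<nu> h 1 - \<nu> h (-1)))"
    unfolding mix_def by (simp add: sum_subtractf right_diff_distrib)
  also have "\<dots> = w h0 * (\<nu> h0 1 - \<nu> h0 (-1)) + (\<Sum>h\<in>E'-{h0}. w h * (\<nu> h 1 - \<nu> h (-1)))"
    using fin h0 by (simp add: sum.remove)
  finally show ?thesis using q by (simp add: algebra_simps)
qed

lemma Phi_split:
  assumes fin: "finite E'" and h0: "h0 \<in> E'" and q: "\<nu> h0 (-1) = 1 - \<nu> h0 1"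
  shows "Phi G E' w \<nu> =
    G (((\<Sum>h\<in>E'-{h0}. w h * (\<nu> h 1 - \<nu> h (-1))) - w h0) + 2 * w h0 * \<nu> h0 1)
    + w h0 * ent (alpha h0 1) (alpha h0 (-1)) (\<nu> h0 1)
    + (\<Sum>h\<in>E'-{h0}. w h * relent (\<nu> h) (alpha h))"
proof -
  have "(\<Sum>h\<in>E'. w h * relent (\<nu> h) (alpha h)) =
     w h0 * relent (\<nu> h0) (alpha h0) + (\<Sum>h\<in>E'-{h0}. w h * relent (\<nu> h) (alpha h))"
    using fin h0 by (simp add: sum.remove)
  then show ?thesis
    unfolding Phi_def Fising_def mag_split[where \<nu>=\<nu> and w=w, OF fin h0 q] relent_ent[where q="\<nu> h0", OF q] by simp
qed

lemma mag_range:
  assumes "admissible E' \<mu>" and "\<forall>h\<in>E'. w h > 0" and "sum w E' = 1"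
  shows "mix E' w \<mu> 1 - mix E' w \<mu> (-1) \<in> {-1..1}"
proof -
  have eq: "mix E' w \<mu> 1 - mix E' w \<mu> (-1) = (\<Sum>h\<in>E'. w h * (\<mu> h 1 - \<mu> h (-1)))"
    unfolding mix_def by (simp add: sum_subtractf right_diff_distrib)
  have b: "\<And>h. h \<in> E' \<Longrightarrow> \<bar>\<mu> h 1 - \<mu> h (-1)\<bar> \<le> 1"
    using assms(1) prob_spins unfolding admissible_def by fastforce
  have "(\<Sum>h\<in>E'. w h * (\<mu> h 1 - \<mu> h (-1))) \<le> (\<Sum>h\<in>E'. w h * 1)"
  proof (intro sum_mono mult_left_mono)
    fix h assume "h \<in> E'" then show "\<mu> h 1 - \<mu> h (-1) \<le> 1" "0 \<le> w h" using b[of h] assms(2) by auto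
  qed
  moreover have "(\<Sum>h\<in>E'. w h * (-1)) \<le> (\<Sum>h\<in>E'. w h * (\<mu> h 1 - \<mu> h (-1)))"
  proof (intro sum_mono mult_left_mono)
    fix h assume "h \<in> E'" then show "-1 \<le> \<mu> h 1 - \<mu> h (-1)" "0 \<le> w h" using b[of h] assms(2) by auto
  qed
  ultimately show ?thesis using eq assms(3) by (simp add: sum_negf)
qed


lemma alpha_pos: "alpha h s > 0" unfolding alpha_def by simp

lemma foc_min:
  fixes G G' :: "real \<Rightarrow> real"
  assumes fin: "finite E'" and wpos: "\<forall>h\<in>E'. w h > 0" and wsum: "sum w E' = 1"
    and M: "M \<ge> 0" and Lip: "\<forall>x\<in>{-1..1}. \<forall>y\<in>{-1..1}. \<bar>G x - G y\<bar> \<le> M * \<bar>x - y\<bar>"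
    and Gd: "\<forall>x\<in>{-1<..<1}. (G has_real_derivative G' x) (at x)"
    and mini: "is_minimizer G E' w \<nu>" and h0: "h0 \<in> E'"
  shows "0 < \<nu> h0 1" "\<nu> h0 1 < 1" "\<nu> h0 (-1) = 1 - \<nu> h0 1"
    "2 * G' (mix E' w \<nu> 1 - mix E' w \<nu> (-1)) + ln (\<nu> h0 1) - ln (alpha h0 1)
       - ln (1 - \<nu> h0 1) + ln (alpha h0 (-1)) = 0"
proof -
  have adm: "admissible E' \<nu>" using mini unfolding is_minimizer_def by auto
  have pr: "is_prob spins (\<nu> h0)" using adm h0 unfolding admissible_def by auto
  show q: "\<nu> h0 (-1) = 1 - \<nu> h0 1" using prob_spins[OF pr] by auto
  have ps: "\<nu> h0 1 \<in> {0..1}" using prob_spins[OF pr] by auto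
  define K where "K = (\<Sum>h\<in>E'-{h0}. w h * (\<nu> h 1 - \<nu> h (-1))) - w h0"
  define R where "R = (\<Sum>h\<in>E'-{h0}. w h * relent (\<nu> h) (alpha h))"
  define w0 where "w0 = w h0"
  define a1 where "a1 = alpha h0 1"
  define a2 where "a2 = alpha h0 (-1)"
  define \<mu> where "\<mu> = (\<lambda>p. \<nu>(h0 := (\<lambda>a. if a = 1 then p else 1 - p)))"
  have w0: "w0 > 0" using wpos h0 unfolding w0_def by auto
  have a1: "a1 > 0" and a2: "a2 > 0" unfolding a1_def a2_def by (auto intro: alpha_pos)
  have m1: "\<mu> p h0 1 = p" "\<mu> p h0 (-1) = 1 - p" for p unfolding \<mu>_def by auto
  have qm: "\<mu> p h0 (-1) = 1 - \<mu> p h0 1" for p by (simp add: m1)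
  have admu: "admissible E' (\<mu> p)" if "p \<in> {0..1}" for p
    using adm that unfolding admissible_def is_prob_def spins_def \<mu>_def by auto
  have Ks: "(\<Sum>h\<in>E'-{h0}. w h * (\<mu> p h 1 - \<mu> p h (-1))) = (\<Sum>h\<in>E'-{h0}. w h * (\<nu> h 1 - \<nu> h (-1)))" for p
    by (intro sum.cong) (auto simp: \<mu>_def)
  have Rs: "(\<Sum>h\<in>E'-{h0}. w h * relent (\<mu> p h) (alpha h)) = R" for p
    unfolding R_def by (intro sum.cong) (auto simp: \<mu>_def)
  have Phimu: "Phi G E' w (\<mu> p) = G (K + 2*w0*p) + w0 * ent a1 a2 p + R" for p
    using Phi_split[where \<nu>="\<mu> p" and w=w and G=G, OF fin h0 qm[of p]]
    unfolding Ks Rs m1 K_def w0_def a1_def a2_def by simp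
  have Phinu: "Phi G E' w \<nu> = G (K + 2*w0*\<nu> h0 1) + w0 * ent a1 a2 (\<nu> h0 1) + R"
    using Phi_split[where \<nu>="\<nu>" and w=w and G=G, OF fin h0 q]
    unfolding K_def w0_def a1_def a2_def R_def by simp
  have magmu: "mix E' w (\<mu> p) 1 - mix E' w (\<mu> p) (-1) = K + 2*w0*p" for p
    using mag_split[where \<nu>="\<mu> p" and w=w, OF fin h0 qm[of p]]
    unfolding Ks m1 K_def w0_def by simp
  have magnu: "mix E' w \<nu> 1 - mix E' w \<nu> (-1) = K + 2*w0*\<nu> h0 1"
    using mag_split[where \<nu>="\<nu>" and w=w, OF fin h0 q] unfolding K_def w0_def by simp
  have rng: "\<forall>p\<in>{0..1}. K + 2*w0*p \<in> {-1..1}"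
    using mag_range[OF admu wpos wsum] magmu by auto
  have mn: "\<forall>p\<in>{0..1}. G (K + 2*w0*\<nu> h0 1) + w0 * ent a1 a2 (\<nu> h0 1) \<le> G (K + 2*w0*p) + w0 * ent a1 a2 p"
  proof
    fix p :: real assume "p \<in> {0..1}"
    then have "Phi G E' w \<nu> \<le> Phi G E' w (\<mu> p)" using mini admu unfolding is_minimizer_def by auto
    then show "G (K + 2*w0*\<nu> h0 1) + w0 * ent a1 a2 (\<nu> h0 1) \<le> G (K + 2*w0*p) + w0 * ent a1 a2 p"
      unfolding Phimu Phinu by simp
  qed
  note F = foc_abstract[OF M Lip rng w0 a1 a2 ps mn Gd]
  show "0 < \<nu> h0 1" "\<nu> h0 1 < 1" using F by auto
  show "2 * G' (mix E' w \<nu> 1 - mix E' w \<nu> (-1)) + ln (\<nu> h0 1) - ln (alpha h0 1)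
       - ln (1 - \<nu> h0 1) + ln (alpha h0 (-1)) = 0"
    using F(4) unfolding magnu a1_def a2_def .
qed


lemma delta_sum:
  assumes "finite E'" "h1 \<in> E'" "h2 \<in> E'"
  shows "(\<Sum>h\<in>E'. ((if h = h1 then 1 else 0) - (if h = h2 then 1 else 0)) * (f h :: real)) = f h1 - f h2"
proof -
  have "\<And>h. ((if h = h1 then 1 else 0) - (if h = h2 then 1 else 0)) * (f h :: real) = (if h = h1 then f h else 0) - (if h = h2 then f h else 0)"
    by auto
  then show ?thesis using assms by (simp add: sum_subtractf)
qed

lemma stab_diff:
  assumes fin: "finite E'" and h1: "h1 \<in> E'" and h2: "h2 \<in> E'"
    and B: "is_stability_vector G' E' w \<nu> B"
  shows "B h1 - B h2 = - ((G' (mix E' w \<nu> 1 - mix E' w \<nu> (-1)) * (\<nu> h1 1 - \<nu> h1 (-1))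
      + relent (\<nu> h1) (alpha h1)) - (G' (mix E' w \<nu> 1 - mix E' w \<nu> (-1)) * (\<nu> h2 1 - \<nu> h2 (-1))
      + relent (\<nu> h2) (alpha h2)))"
proof -
  define x where "x = (\<lambda>h. (if h = h1 then 1 else 0) - (if h = h2 then 1 else (0::real)))"
  have sx: "sum x E' = 0" using delta_sum[OF fin h1 h2, of "\<lambda>_. 1"] unfolding x_def by simp
  have ds: "\<And>f. (\<Sum>h\<in>E'. x h * f h) = f h1 - f h2" unfolding x_def using delta_sum[OF fin h1 h2] by simp
  from B sx have "(\<Sum>h\<in>E'. x h * B h) =
          - (dFising G' (mix E' w \<nu>) (\<lambda>a. \<Sum>h\<in>E'. x h * \<nu> h a)
             + (\<Sum>h\<in>E'. x h * relent (\<nu> h) (alpha h)))"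
    unfolding is_stability_vector_def by blast
  then show ?thesis unfolding ds dFising_def by (simp add: algebra_simps)
qed

lemma char_min:
  fixes G G' :: "real \<Rightarrow> real"
  assumes fin: "finite E'" and wpos: "\<forall>h\<in>E'. w h > 0" and wsum: "sum w E' = 1"
    and M: "M \<ge> 0" and Lip: "\<forall>x\<in>{-1..1}. \<forall>y\<in>{-1..1}. \<bar>G x - G y\<bar> \<le> M * \<bar>x - y\<bar>"
    and Gd: "\<forall>x\<in>{-1<..<1}. (G has_real_derivative G' x) (at x)"
    and mini: "is_minimizer G E' w \<nu>" and h0: "h0 \<in> E'"
    and g: "g = G' (mix E' w \<nu> 1 - mix E' w \<nu> (-1))"
  shows "\<nu> h0 (-1) * (1 + exp (2 * (h0 - g))) = 1" "\<nu> h0 (-1) > 0" "\<nu> h0 1 = 1 - \<nu> h0 (-1)"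
    "g * (\<nu> h0 1 - \<nu> h0 (-1)) + relent (\<nu> h0) (alpha h0) = ln (\<nu> h0 (-1)) + ln (2 * cosh h0) + h0 - g"
proof -
  note F = foc_min[OF fin wpos wsum M Lip Gd mini h0]
  define p where "p = \<nu> h0 1"
  define q where "q = \<nu> h0 (-1)"
  have p0: "p > 0" and q0: "q > 0" and pq: "p = 1 - q" using F(1-3) unfolding p_def q_def by auto
  show "\<nu> h0 (-1) > 0" "\<nu> h0 1 = 1 - \<nu> h0 (-1)" using q0 pq unfolding p_def q_def by auto
  have la1: "ln (alpha h0 1) = h0 - ln (2 * cosh h0)" unfolding alpha_def by (simp add: ln_div)
  have la2: "ln (alpha h0 (-1)) = - h0 - ln (2 * cosh h0)" unfolding alpha_def by (simp add: ln_div)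
  have lp: "ln p = ln q + 2 * (h0 - g)"
  proof -
    have "2 * g + ln p - ln (alpha h0 1) - ln q + ln (alpha h0 (-1)) = 0"
      using F(4) unfolding F(3)[symmetric] g[symmetric] p_def q_def .
    then show ?thesis unfolding la1 la2 by (simp add: algebra_simps)
  qed
  have "p = q * exp (2 * (h0 - g))"
    using arg_cong[OF lp, of exp] p0 q0 by (simp add: exp_add)
  then show "\<nu> h0 (-1) * (1 + exp (2 * (h0 - g))) = 1" using pq unfolding q_def by (simp add: algebra_simps)
  have "relent (\<nu> h0) (alpha h0) = p * (ln p - ln (alpha h0 1)) + q * (ln q - ln (alpha h0 (-1)))"
  proof -
    have a: "alpha h0 1 > 0" "alpha h0 (-1) > 0" by (auto intro: alpha_pos)
    have "1 - p = q" using pq by simp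
    then show ?thesis
      unfolding relent_ent[OF F(3)] ent_def p_def[symmetric] using p0 q0 a
      by (simp add: ln_div)
  qed
  also have "\<dots> = ln q + ln (2 * cosh h0) + h0 - 2 * g * (1 - q)"
    unfolding lp la1 la2 unfolding pq by (simp add: algebra_simps)
  finally show "g * (\<nu> h0 1 - \<nu> h0 (-1)) + relent (\<nu> h0) (alpha h0) = ln (\<nu> h0 (-1)) + ln (2 * cosh h0) + h0 - g"
    unfolding p_def[symmetric] q_def[symmetric] pq by (simp add: algebra_simps)
qed


lemma two_elems:
  assumes "finite E'" "card E' \<ge> 2"
  obtains h1 h2 where "h1 \<in> E'" "h2 \<in> E'" "h1 \<noteq> h2"
proof -
  have "E' \<noteq> {}" using assms by auto
  then obtain h1 where h1: "h1 \<in> E'" by auto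
  have "card (E' - {h1}) \<ge> 1" using assms h1 by (simp add: card_Diff_singleton)
  then have "E' - {h1} \<noteq> {}" by (metis card.empty not_one_le_zero)
  then obtain h2 where "h2 \<in> E' - {h1}" by auto
  then show ?thesis using that h1 by auto
qed

lemma exp_cross:
  fixes h1 h2 g g' :: real
  assumes "h1 \<noteq> h2"
    and eq: "(1 + exp (2 * (h1 - g))) * (1 + exp (2 * (h2 - g'))) = (1 + exp (2 * (h1 - g'))) * (1 + exp (2 * (h2 - g)))"
  shows "g = g'"
proof -
  define U1 where "U1 = exp (2*h1)"
  define U2 where "U2 = exp (2*h2)"
  define A where "A = exp (-2*g)"
  define A' where "A' = exp (-2*g')"
  have e: "\<And>h c :: real. exp (2 * (h - c)) = exp (2*h) * exp (-2*c)"
    by (simp add: exp_add[symmetric] algebra_simps)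
  have "(1 + U1*A) * (1 + U2*A') = (1 + U1*A') * (1 + U2*A)"
    using eq unfolding e U1_def U2_def A_def A'_def .
  then have "(U1 - U2) * (A - A') = 0" by (simp add: algebra_simps)
  moreover have "U1 \<noteq> U2" unfolding U1_def U2_def using assms(1) by simp
  ultimately have "A = A'" by simp
  then show ?thesis unfolding A_def A'_def by simp
qed

theorem mainTheorem6:
  fixes E' :: "real set" and w :: "real \<Rightarrow> real"
    and G G' G'' :: "real \<Rightarrow> real"
    and \<nu> \<nu>' :: "real \<Rightarrow> real \<Rightarrow> real" and B B' :: "real \<Rightarrow> real"
  assumes fin: "finite E'" and L2: "card E' \<ge> 2"
    and wpos: "\<forall>h\<in>E'. w h > 0" and wsum: "sum w E' = 1"
    and G_deriv: "\<forall>x\<in>{-1..1}. (G has_real_derivative G' x) (at x within {-1..1})"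
    and G'_deriv: "\<forall>x\<in>{-1..1}. (G' has_real_derivative G'' x) (at x within {-1..1})"
    and G''_cont: "continuous_on {-1..1} G''"
    and G'_inj: "inj_on G' {-1..1}"
    and min1: "is_minimizer G E' w \<nu>" and min2: "is_minimizer G E' w \<nu>'"
    and distinct: "\<exists>h\<in>E'. \<exists>\<sigma>\<in>spins. \<nu> h \<sigma> \<noteq> \<nu>' h \<sigma>"
    and B1: "is_stability_vector G' E' w \<nu> B"
    and B2: "is_stability_vector G' E' w \<nu>' B'"
  shows "\<exists>h\<in>E'. B h \<noteq> B' h"
proof (rule ccontr)
  assume "\<not> (\<exists>h\<in>E'. B h \<noteq> B' h)"
  then have eqB: "\<And>h. h \<in> E' \<Longrightarrow> B h = B' h" by auto
  obtain M where M: "M \<ge> 0" and Lip: "\<forall>x\<in>{-1..1}. \<forall>y\<in>{-1..1}. \<bar>G x - G y\<bar> \<le> M * \<bar>x - y\<bar>"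
    using lipschitz_G[OF G_deriv G'_deriv] by auto
  have Gd: "\<forall>x\<in>{-1<..<1}. (G has_real_derivative G' x) (at x)"
  proof
    fix x :: real assume x: "x \<in> {-1<..<1}"
    then have "(G has_real_derivative G' x) (at x within {-1..1})" using G_deriv by auto
    moreover have "at x within {-1..1} = at x" using x by (intro at_within_interior) simp
    ultimately show "(G has_real_derivative G' x) (at x)" by simp
  qed
  define g where "g = G' (mix E' w \<nu> 1 - mix E' w \<nu> (-1))"
  define g' where "g' = G' (mix E' w \<nu>' 1 - mix E' w \<nu>' (-1))"
  note C = char_min[OF fin wpos wsum M Lip Gd min1 _ g_def]
  note C' = char_min[OF fin wpos wsum M Lip Gd min2 _ g'_def]
  obtain h1 h2 where h1: "h1 \<in> E'" and h2: "h2 \<in> E'" and h12: "h1 \<noteq> h2"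
    using two_elems[OF fin L2] by blast
  have lnq: "ln (\<nu> h (-1)) = - ln (1 + exp (2 * (h - g)))" if "h \<in> E'" for h
  proof -
    have "\<nu> h (-1) = 1 / (1 + exp (2 * (h - g)))" 
    proof -
      have X: "1 + exp (2 * (h - g)) \<noteq> 0" by (metis add_pos_pos exp_gt_zero less_irrefl zero_less_one)
      show ?thesis by (subst nonzero_eq_divide_eq[OF X]) (rule C(1)[OF that])
    qed
    then show ?thesis by (simp add: ln_div add_pos_pos)
  qed
  have lnq': "ln (\<nu>' h (-1)) = - ln (1 + exp (2 * (h - g')))" if "h \<in> E'" for h
  proof -
    have "\<nu>' h (-1) = 1 / (1 + exp (2 * (h - g')))" 
    proof -
      have X: "1 + exp (2 * (h - g')) \<noteq> 0" by (metis add_pos_pos exp_gt_zero less_irrefl zero_less_one)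
      show ?thesis by (subst nonzero_eq_divide_eq[OF X]) (rule C'(1)[OF that])
    qed
    then show ?thesis by (simp add: ln_div add_pos_pos)
  qed
  have P: "\<And>t. 1 + exp t > (0::real)" by (metis add_pos_pos exp_gt_zero zero_less_one)
  have "B h1 - B h2 = B' h1 - B' h2" using eqB h1 h2 by simp
  then have "ln (\<nu> h1 (-1)) - ln (\<nu> h2 (-1)) = ln (\<nu>' h1 (-1)) - ln (\<nu>' h2 (-1))"
    unfolding stab_diff[OF fin h1 h2 B1] stab_diff[OF fin h1 h2 B2]
      g_def[symmetric] g'_def[symmetric] C(4)[OF h1] C(4)[OF h2] C'(4)[OF h1] C'(4)[OF h2]
    by simp
  then have "ln (1 + exp (2 * (h1 - g))) + ln (1 + exp (2 * (h2 - g'))) =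
      ln (1 + exp (2 * (h1 - g'))) + ln (1 + exp (2 * (h2 - g)))"
    unfolding lnq[OF h1] lnq[OF h2] lnq'[OF h1] lnq'[OF h2] by simp
  then have "ln ((1 + exp (2 * (h1 - g))) * (1 + exp (2 * (h2 - g')))) =
      ln ((1 + exp (2 * (h1 - g'))) * (1 + exp (2 * (h2 - g))))"
    unfolding ln_mult_pos[OF P P] .
  then have "(1 + exp (2 * (h1 - g))) * (1 + exp (2 * (h2 - g'))) =
      (1 + exp (2 * (h1 - g'))) * (1 + exp (2 * (h2 - g)))"
    using ln_inj_iff[OF mult_pos_pos[OF P P] mult_pos_pos[OF P P]] by blast
  then have gg: "g = g'" using exp_cross[OF h12] by blast
  have same: "\<nu> h s = \<nu>' h s" if "h \<in> E'" "s \<in> spins" for h s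
  proof -
    have m: "\<nu> h (-1) = \<nu>' h (-1)" using C(1)[OF that(1)] C'(1)[OF that(1)] unfolding gg
      by (metis mult.commute nonzero_eq_divide_eq add_pos_pos exp_gt_zero zero_less_one less_irrefl)
    have "s = -1 \<or> s = 1" using that(2) unfolding spins_def by auto
    then show ?thesis using m C(3)[OF that(1)] C'(3)[OF that(1)] by auto
  qed
  then show False using distinct by blast
qed

end
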